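(* Let $k\ge0$, $m\ge1$ and define $Q(a,x):=\sum_{\varepsilon\in\{0,1\}^k}(-1)^{\#1(\varepsilon)}P(\varepsilon;b)$, where $\#1(\varepsilon)$ is the number of ones in $\varepsilon$. Then $Q(a,x)$ can be written as a quotient $f(a,x)/g(a,x)$ of polynomials such that $g$ has no factor of the form $M(\varepsilon';b;t)$ for any $\varepsilon'\in\{0,1\}^k$ and any $1\le t\le k$.
   Context: Let $a=(a_1,\dots,a_k)$ and $x=(x_1,\dots,x_m)$ be indeterminates and $b=(b_1,\dots,b_{k+m}):=(a_1,\dots,a_k,x_1,\dots,x_m)$. For a binary sequence $\varepsilon=(\varepsilon_1,\dots,\varepsilon_k)$ put $\delta^\varepsilon=(\delta^\varepsilon_1,\dots,\delta^\varepsilon_{k+m}):=(1,\varepsilon_1,\dots,\varepsilon_k,0,\dots,0)$ (length $k+m$: a $1$ prepended and $m-1$ zeros appended). Let $L(\delta^\varepsilon,j):=\max\{i\le j:\delta^\varepsilon_i=1\}$, $M(\varepsilon;b;j):=\sum_{\ell=L(\delta^\varepsilon,j)}^{j}b_\ell$, and $P(\varepsilon;b):=\prod_{j=1}^{k+m}\frac1{M(\varepsilon;b;j)}$. *)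

theory Defs
  imports Complex_Main "HOL-Library.Poly_Mapping" "HOL-Computational_Algebra.Fraction_Field"
begin

text \<open>Multivariate polynomials with rational coefficients in the indeterminates
  b_1, ..., b_{k+m}, where b_i = a_i for i \<le> k and b_{k+i} = x_i.\<close>
type_synonym mpoly = "(nat \<Rightarrow>\<^sub>0 nat) \<Rightarrow>\<^sub>0 rat"

definition var :: "nat \<Rightarrow> mpoly" where
  "var i = Poly_Mapping.single (Poly_Mapping.single i 1) 1"

text \<open>delta^eps = (1, eps_1, ..., eps_k, 0, ..., 0), indexed from 1; eps is a
  bool list of length k (True = 1).\<close>
definition delta :: "bool list \<Rightarrow> nat \<Rightarrow> bool" where
  "delta eps i = (i = 1 \<or> (2 \<le> i \<and> i \<le> length eps + 1 \<and> eps ! (i - 2)))"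

definition Lidx :: "bool list \<Rightarrow> nat \<Rightarrow> nat" where
  "Lidx eps j = Max {i. 1 \<le> i \<and> i \<le> j \<and> delta eps i}"

definition Mpoly :: "bool list \<Rightarrow> nat \<Rightarrow> mpoly" where
  "Mpoly eps j = (\<Sum>l\<in>{Lidx eps j..j}. var l)"

definition Pfrac :: "nat \<Rightarrow> bool list \<Rightarrow> mpoly fract" where
  "Pfrac m eps = (\<Prod>j\<in>{1..length eps + m}. Fract 1 (Mpoly eps j))"

definition Qfrac :: "nat \<Rightarrow> nat \<Rightarrow> mpoly fract" where
  "Qfrac k m = (\<Sum>eps\<in>{eps. length eps = k}. (-1) ^ count_list eps True * Pfrac m eps)"

end

theory Submission imports Defs begin


definition me :: "nat \<Rightarrow> (nat \<Rightarrow>\<^sub>0 nat) \<Rightarrow> rat" where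
  "me c \<mu> = (if Poly_Mapping.keys \<mu> \<subseteq> {c} then 1 else 0)"

definition ev :: "nat \<Rightarrow> mpoly \<Rightarrow> rat" where
  "ev c p = (\<Sum>\<mu>\<in>Poly_Mapping.keys p. Poly_Mapping.lookup p \<mu> * me c \<mu>)"

lemma ev_superset: "finite A \<Longrightarrow> Poly_Mapping.keys p \<subseteq> A \<Longrightarrow> ev c p = (\<Sum>\<mu>\<in>A. Poly_Mapping.lookup p \<mu> * me c \<mu>)"
  unfolding ev_def by (rule sum.mono_neutral_left) (auto simp: in_keys_iff)

lemma ev_add: "ev c (p + q) = ev c p + ev c q"
proof -
  have f: "finite (Poly_Mapping.keys p \<union> Poly_Mapping.keys q)" by simp
  have "ev c (p + q) = (\<Sum>\<mu>\<in>Poly_Mapping.keys p \<union> Poly_Mapping.keys q. Poly_Mapping.lookup (p+q) \<mu> * me c \<mu>)"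
    by (rule ev_superset[OF f keys_add])
  also have "\<dots> = (\<Sum>\<mu>\<in>Poly_Mapping.keys p \<union> Poly_Mapping.keys q. Poly_Mapping.lookup p \<mu> * me c \<mu>) + (\<Sum>\<mu>\<in>Poly_Mapping.keys p \<union> Poly_Mapping.keys q. Poly_Mapping.lookup q \<mu> * me c \<mu>)"
    by (simp add: lookup_add algebra_simps sum.distrib)
  also have "\<dots> = ev c p + ev c q"
    using ev_superset[OF f, of p c] ev_superset[OF f, of q c] by auto
  finally show ?thesis .
qed

lemma ev_zero[simp]: "ev c 0 = 0" by (simp add: ev_def)

lemma ev_single: "ev c (Poly_Mapping.single \<mu> a) = a * me c \<mu>"
  by (simp add: ev_def)

lemma ev_sum: "ev c (sum f A) = (\<Sum>x\<in>A. ev c (f x))"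
  by (induction A rule: infinite_finite_induct) (auto simp: ev_add)

lemma me_add: "me c (\<mu> + \<nu>) = me c \<mu> * me c \<nu>"
proof -
  have "Poly_Mapping.keys (\<mu> + \<nu>) \<subseteq> {c} \<longleftrightarrow> Poly_Mapping.keys \<mu> \<subseteq> {c} \<and> Poly_Mapping.keys \<nu> \<subseteq> {c}"
  proof -
    have "\<And>x. x \<in> Poly_Mapping.keys (\<mu> + \<nu>) \<longleftrightarrow> x \<in> Poly_Mapping.keys \<mu> \<or> x \<in> Poly_Mapping.keys \<nu>"
      by (simp add: in_keys_iff lookup_add)
    then show ?thesis by blast
  qed
  then show ?thesis by (simp add: me_def)
qed

lemma update_eq: "a \<notin> Poly_Mapping.keys f \<Longrightarrow> Poly_Mapping.update a b f = f + Poly_Mapping.single a b"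
  by (rule poly_mapping_eqI) (auto simp: lookup_update lookup_add lookup_single in_keys_iff when_def)

lemma ev_mult_single: "ev c (Poly_Mapping.single \<mu> a * q) = a * me c \<mu> * ev c q"
proof (induction q rule: Poly_Mapping.update_induct)
  case const
  then show ?case by simp
next
  case (update x y f)
  then show ?case
    by (simp add: update_eq distrib_left ev_add mult_single ev_single me_add algebra_simps)
qed

lemma ev_mult: "ev c (p * q) = ev c p * ev c q"
proof (induction p rule: Poly_Mapping.update_induct)
  case const
  then show ?case by simp
next
  case (update f x y)
  have eq: "Poly_Mapping.update x y f = f + Poly_Mapping.single x y"
    using update(1) by (rule update_eq)
  have "ev c (Poly_Mapping.update x y f * q) = ev c (f * q) + ev c (Poly_Mapping.single x y * q)"
    by (simp only: eq distrib_right ev_add)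
  also have "\<dots> = ev c f * ev c q + y * me c x * ev c q"
    by (simp only: update(3) ev_mult_single)
  also have "\<dots> = ev c (Poly_Mapping.update x y f) * ev c q"
    by (simp only: eq ev_add ev_single distrib_right)
  finally show ?case .
qed

lemma ev_one[simp]: "ev c 1 = 1"
  by (simp add: ev_def me_def)

lemma ev_var: "ev c (var l) = (if l = c then 1 else 0)"
  by (simp add: var_def ev_single me_def)



definition w :: "nat \<Rightarrow> mpoly fract" where "w l = Fract (var l) 1"
definition S :: "nat \<Rightarrow> nat \<Rightarrow> mpoly fract" where "S s t = (\<Sum>l\<in>{s..<t}. w l)"
definition F :: "nat \<Rightarrow> nat \<Rightarrow> mpoly fract" where
  "F s t = (\<Prod>j\<in>{s..<t}. inverse (S s (Suc j)))"
definition B :: "nat \<Rightarrow> nat \<Rightarrow> mpoly fract" where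
  "B s t = (\<Prod>i\<in>{s..<t}. inverse (S i t))"
definition Z :: "nat \<Rightarrow> nat \<Rightarrow> mpoly fract" where
  "Z s t = (\<Sum>r\<in>{s..t}. (-1)^r * B s r * F r t)"

lemma fract_sum: "Fract (sum f A) 1 = (\<Sum>x\<in>A. Fract (f x) (1::'a::idom))"
proof (induction A rule: infinite_finite_induct)
  case (insert x F)
  have "Fract (f x) 1 + Fract (sum f F) 1 = Fract (f x + sum f F) (1::'a)" by simp
  then show ?case using insert by simp
qed (auto simp: Zero_fract_def)

lemma S_fract: "S s t = Fract (\<Sum>l\<in>{s..<t}. var l) 1"
  by (simp add: S_def w_def fract_sum)

lemma lookup_var: "Poly_Mapping.lookup (var l) (Poly_Mapping.single s 1) = (if l = s then 1 else 0)"
proof -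
  have "Poly_Mapping.single l (1::nat) = Poly_Mapping.single s 1 \<Longrightarrow> l = s"
    by (metis lookup_single_eq lookup_single_not_eq zero_neq_one)
  then show ?thesis by (auto simp: var_def lookup_single when_def)
qed

lemma sum_var_nz: "finite A \<Longrightarrow> s \<in> A \<Longrightarrow> (\<Sum>l\<in>A. var l) \<noteq> 0"
proof
  assume "finite A" "s \<in> A" "(\<Sum>l\<in>A. var l) = 0"
  then have "Poly_Mapping.lookup (\<Sum>l\<in>A. var l) (Poly_Mapping.single s 1) = 0" by simp
  moreover have "Poly_Mapping.lookup (\<Sum>l\<in>A. var l) (Poly_Mapping.single s 1) = 1"
  proof -
    have "Poly_Mapping.lookup (\<Sum>l\<in>A. var l) (Poly_Mapping.single s 1) = (\<Sum>x\<in>A. if x = s then 1 else 0)"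
      unfolding lookup_sum by (rule sum.cong) (simp_all only: lookup_var)
    then show ?thesis using \<open>finite A\<close> \<open>s \<in> A\<close> by simp
  qed
  ultimately show False by simp
qed

lemma S_nz: "s < t \<Longrightarrow> S s t \<noteq> 0"
  using sum_var_nz[of "{s..<t}" s] by (simp add: S_fract eq_fract Zero_fract_def)

lemma S_self[simp]: "S s s = 0" by (simp add: S_def)

lemma S_split: "s \<le> r \<Longrightarrow> r \<le> t \<Longrightarrow> S s t = S s r + S r t"
  unfolding S_def by (simp add: sum.atLeastLessThan_concat)

lemma F_self[simp]: "F s s = 1" by (simp add: F_def)
lemma B_self[simp]: "B s s = 1" by (simp add: B_def)

lemma F_Suc: "s \<le> t \<Longrightarrow> F s (Suc t) = F s t * inverse (S s (Suc t))"
  unfolding F_def by (simp add: prod.atLeastLessThan_Suc)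

lemma SF: "s < t \<Longrightarrow> S s t * F s t = F s (t - 1)"
proof -
  assume a: "s < t"
  then obtain t' where t: "t = Suc t'" "s \<le> t'" by (cases t) auto
  show ?thesis using S_nz[OF a] unfolding t by (simp add: F_Suc[OF t(2)])
qed

lemma SB: "s < t \<Longrightarrow> S s t * B s t = B (Suc s) t"
proof -
  assume a: "s < t"
  have "B s t = inverse (S s t) * B (Suc s) t"
    unfolding B_def using a by (simp add: prod.atLeast_Suc_lessThan)
  then show ?thesis using S_nz[OF a] by simp
qed

lemma Z_rec:
  assumes "s < t"
  shows "S s t * Z s t = Z (Suc s) t + Z s (t - 1)"
proof -
  have "S s t * Z s t = (\<Sum>r\<in>{s..t}. (-1)^r * B s r * F r t * (S s r + S r t))"
    unfolding Z_def sum_distrib_left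
    by (rule sum.cong) (auto simp: S_split[symmetric] mult_ac)
  also have "\<dots> = (\<Sum>r\<in>{s..t}. (-1)^r * (S s r * B s r) * F r t)
                 + (\<Sum>r\<in>{s..t}. (-1)^r * B s r * (S r t * F r t))"
    by (simp add: sum.distrib algebra_simps)
  also have "(\<Sum>r\<in>{s..t}. (-1)^r * (S s r * B s r) * F r t) = Z (Suc s) t"
  proof -
    have "{s..t} = insert s {Suc s..t}" using assms by auto
    then have "(\<Sum>r\<in>{s..t}. (-1)^r * (S s r * B s r) * F r t)
        = (\<Sum>r\<in>{Suc s..t}. (-1)^r * (S s r * B s r) * F r t)" by simp
    also have "\<dots> = Z (Suc s) t" unfolding Z_def
      by (rule sum.cong) (auto simp: SB)
    finally show ?thesis .
  qed
  also have "(\<Sum>r\<in>{s..t}. (-1)^r * B s r * (S r t * F r t)) = Z s (t - 1)"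
  proof -
    have "{s..t} = insert t {s..t-1}" using assms by auto
    then have "(\<Sum>r\<in>{s..t}. (-1)^r * B s r * (S r t * F r t))
        = (\<Sum>r\<in>{s..t-1}. (-1)^r * B s r * (S r t * F r t))" using assms by simp
    also have "\<dots> = Z s (t - 1)" unfolding Z_def
      by (rule sum.cong) (use assms in \<open>auto simp: SF\<close>)
    finally show ?thesis .
  qed
  finally show ?thesis .
qed

lemma Z_self: "Z s s = (-1)^s" by (simp add: Z_def)

lemma Z_zero: "s < t \<Longrightarrow> Z s t = 0"
proof (induction "t - s" arbitrary: s t rule: less_induct)
  case less
  have "Z (Suc s) t + Z s (t - 1) = 0"
  proof (cases "t = Suc s")
    case True
    then show ?thesis by (simp add: Z_self)
  next
    case False
    then have "Z (Suc s) t = 0" "Z s (t - 1) = 0" using less by auto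
    then show ?thesis by simp
  qed
  then have "S s t * Z s t = 0" using Z_rec[OF less(2)] by simp
  then show ?case using S_nz[OF less(2)] by simp
qed



definition PP :: "nat \<Rightarrow> bool list \<Rightarrow> mpoly fract" where
  "PP n eps = (\<Prod>j\<in>{1..n}. inverse (Fract (Mpoly eps j) 1))"
definition QQ :: "nat \<Rightarrow> nat \<Rightarrow> mpoly fract" where
  "QQ k n = (\<Sum>eps\<in>{eps. length eps = k}. (-1) ^ count_list eps True * PP n eps)"

lemma Qfrac_QQ: "Qfrac k m = QQ k (k + m)"
  unfolding Qfrac_def QQ_def PP_def Pfrac_def by simp

lemma Mpoly_S: "Fract (Mpoly eps j) 1 = S (Lidx eps j) (Suc j)"
  unfolding Mpoly_def S_fract by (simp add: atLeastLessThanSuc_atLeastAtMost)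

lemma delta_False: "delta (eps @ [False]) = delta eps"
  by (rule ext) (auto simp: delta_def nth_append)

lemma delta_True: "delta (eps @ [True]) i = (delta eps i \<or> i = length eps + 2)"
  by (auto simp: delta_def nth_append)

lemma delta_le: "delta eps i \<Longrightarrow> i \<le> length eps + 1"
  by (auto simp: delta_def)

lemma Lidx_True_low: "j < length eps + 2 \<Longrightarrow> Lidx (eps @ [True]) j = Lidx eps j"
  unfolding Lidx_def by (rule arg_cong[where f=Max]) (auto simp: delta_True)

lemma Lidx_True_high: "length eps + 2 \<le> j \<Longrightarrow> Lidx (eps @ [True]) j = length eps + 2"
  unfolding Lidx_def
  by (rule Max_eqI) (auto simp: delta_True dest: delta_le)

lemma Lidx_nil: "1 \<le> j \<Longrightarrow> Lidx [] j = 1"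
  unfolding Lidx_def by (rule Max_eqI) (auto simp: delta_def)

lemma PP_False: "PP n (eps @ [False]) = PP n eps"
  by (simp add: PP_def Mpoly_def Lidx_def delta_False)

lemma PP_True:
  assumes "length eps + 1 \<le> n"
  shows "PP n (eps @ [True]) = PP (length eps + 1) eps * F (length eps + 2) (n + 1)"
proof -
  let ?k = "length eps + 1"
  have split: "{1..n} = {1..?k} \<union> {?k+1..n}" using assms by auto
  have "PP n (eps @ [True]) = (\<Prod>j\<in>{1..?k}. inverse (Fract (Mpoly (eps @ [True]) j) 1))
      * (\<Prod>j\<in>{?k+1..n}. inverse (Fract (Mpoly (eps @ [True]) j) 1))"
    unfolding PP_def split by (rule prod.union_disjoint) auto
  also have "(\<Prod>j\<in>{1..?k}. inverse (Fract (Mpoly (eps @ [True]) j) 1)) = PP ?k eps"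
    unfolding PP_def Mpoly_S by (rule prod.cong) (auto simp: Lidx_True_low)
  also have "(\<Prod>j\<in>{?k+1..n}. inverse (Fract (Mpoly (eps @ [True]) j) 1)) = F (length eps + 2) (n + 1)"
  proof -
    have "(\<Prod>j\<in>{?k+1..n}. inverse (Fract (Mpoly (eps @ [True]) j) 1))
        = (\<Prod>j\<in>{length eps + 2..<n+1}. inverse (S (length eps + 2) (Suc j)))"
      unfolding Mpoly_S by (rule prod.cong) (auto simp: Lidx_True_high)
    then show ?thesis by (simp add: F_def)
  qed
  finally show ?thesis .
qed

lemma lists_Suc: "{eps::bool list. length eps = Suc k}
   = (\<lambda>e. e @ [False]) ` {eps. length eps = k} \<union> (\<lambda>e. e @ [True]) ` {eps. length eps = k}"
proof (rule set_eqI, rule iffI)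
  fix x :: "bool list" assume "x \<in> {eps. length eps = Suc k}"
  then have "x \<noteq> []" "length (butlast x) = k" by auto
  then have "x = butlast x @ [last x]" by simp
  then show "x \<in> (\<lambda>e. e @ [False]) ` {eps. length eps = k} \<union> (\<lambda>e. e @ [True]) ` {eps. length eps = k}"
    using \<open>length (butlast x) = k\<close> by (cases "last x") (auto intro: image_eqI)
qed auto

lemma finite_lists: "finite {eps::bool list. length eps = k}"
  using finite_lists_length_eq[of "UNIV :: bool set" k] by simp

lemma QQ_Suc:
  assumes "k + 1 \<le> n"
  shows "QQ (Suc k) n = QQ k n - QQ k (k + 1) * F (k + 2) (n + 1)"
proof -
  let ?L = "{eps::bool list. length eps = k}"
  have inj1: "inj_on (\<lambda>e. e @ [False]) ?L" and inj2: "inj_on (\<lambda>e. e @ [True]) ?L"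
    by (auto simp: inj_on_def)
  have disj: "(\<lambda>e. e @ [False]) ` ?L \<inter> (\<lambda>e. e @ [True]) ` ?L = {}" by auto
  have "QQ (Suc k) n = (\<Sum>eps\<in>(\<lambda>e. e @ [False]) ` ?L. (-1) ^ count_list eps True * PP n eps)
      + (\<Sum>eps\<in>(\<lambda>e. e @ [True]) ` ?L. (-1) ^ count_list eps True * PP n eps)"
    unfolding QQ_def lists_Suc by (rule sum.union_disjoint) (use disj finite_lists in auto)
  also have "(\<Sum>eps\<in>(\<lambda>e. e @ [False]) ` ?L. (-1) ^ count_list eps True * PP n eps) = QQ k n"
    unfolding QQ_def by (simp add: sum.reindex[OF inj1] PP_False)
  also have "(\<Sum>eps\<in>(\<lambda>e. e @ [True]) ` ?L. (-1) ^ count_list eps True * PP n eps)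
      = (\<Sum>eps\<in>?L. - ((-1) ^ count_list eps True * PP (k+1) eps * F (k + 2) (n + 1)))"
    by (simp add: sum.reindex[OF inj2]) (rule sum.cong, use assms in \<open>auto simp: PP_True\<close>)
  also have "\<dots> = - (QQ k (k + 1) * F (k + 2) (n + 1))"
    unfolding QQ_def by (simp add: sum_distrib_right sum_negf)
  finally show ?thesis by simp
qed

lemma QQ_formula: "k \<le> n \<Longrightarrow> QQ k n = - (\<Sum>p\<in>{1..k+1}. (-1)^p * B 1 p * F p (n + 1))"
proof (induction k arbitrary: n)
  case 0
  have "QQ 0 n = PP n []" by (simp add: QQ_def)
  also have "\<dots> = F 1 (n + 1)"
    unfolding PP_def Mpoly_S F_def
    by (rule prod.reindex_cong[where l=id]) (auto simp: Lidx_nil)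
  finally show ?case by simp
next
  case (Suc k)
  have z: "Z 1 (k + 2) = 0" by (rule Z_zero) simp
  define X where "X = (\<Sum>p\<in>{1..k+1}. (-1)^p * B 1 p * F p (k + 2))"
  have "Z 1 (k+2) = X + (-1)^(k+2) * B 1 (k+2)"
    unfolding Z_def X_def by (simp add: numeral_2_eq_2)
  moreover have "QQ k (k + 1) = - X" using Suc.IH[of "k+1"] by (simp add: X_def)
  ultimately have q: "QQ k (k + 1) = (-1)^(k+2) * B 1 (k+2)"
    using z by (metis add.commute add_eq_0_iff)
  have "QQ (Suc k) n = QQ k n - QQ k (k + 1) * F (k + 2) (n + 1)"
    using Suc.prems by (intro QQ_Suc) simp
  also have "\<dots> = - (\<Sum>p\<in>{1..k+1}. (-1)^p * B 1 p * F p (n + 1)) - (-1)^(k+2) * B 1 (k+2) * F (k + 2) (n + 1)"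
    using Suc.prems by (simp only: Suc.IH[of n] q)
  also have "\<dots> = - (\<Sum>p\<in>{1..k+2}. (-1)^p * B 1 p * F p (n + 1))"
  proof -
    have "(\<Sum>p\<in>{1..k+2}. (-1)^p * B 1 p * F p (n + 1)) = (\<Sum>p\<in>{1..k+1}. (-1)^p * B 1 p * F p (n + 1)) + (-1)^(k+2) * B 1 (k+2) * F (k + 2) (n + 1)"
      by (simp add: numeral_2_eq_2)
    then show ?thesis by simp
  qed
  finally show ?case by simp
qed



definition T :: "nat \<Rightarrow> nat \<Rightarrow> nat \<Rightarrow> mpoly fract" where
  "T k s t = (\<Sum>p\<in>{s..k+1}. (-1)^p * B s p * F p t)"

lemma T_rec:
  assumes "s \<le> k + 1" "k + 2 \<le> t"
  shows "S s t * T k s t = T k (Suc s) t + T k s (t - 1)"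
proof -
  have "S s t * T k s t = (\<Sum>r\<in>{s..k+1}. (-1)^r * B s r * F r t * (S s r + S r t))"
    unfolding T_def sum_distrib_left
    by (rule sum.cong) (use assms in \<open>auto simp: S_split[symmetric] mult_ac\<close>)
  also have "\<dots> = (\<Sum>r\<in>{s..k+1}. (-1)^r * (S s r * B s r) * F r t)
                 + (\<Sum>r\<in>{s..k+1}. (-1)^r * B s r * (S r t * F r t))"
    by (simp add: sum.distrib algebra_simps)
  also have "(\<Sum>r\<in>{s..k+1}. (-1)^r * (S s r * B s r) * F r t) = T k (Suc s) t"
  proof -
    have "{s..k+1} = insert s {Suc s..k+1}" using assms by auto
    then have "(\<Sum>r\<in>{s..k+1}. (-1)^r * (S s r * B s r) * F r t)
        = (\<Sum>r\<in>{Suc s..k+1}. (-1)^r * (S s r * B s r) * F r t)" by simp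
    also have "\<dots> = T k (Suc s) t" unfolding T_def
      by (rule sum.cong) (auto simp: SB)
    finally show ?thesis .
  qed
  also have "(\<Sum>r\<in>{s..k+1}. (-1)^r * B s r * (S r t * F r t)) = T k s (t - 1)"
    unfolding T_def by (rule sum.cong) (use assms in \<open>auto simp: SF\<close>)
  finally show ?thesis .
qed

definition Gd :: "nat \<Rightarrow> mpoly fract \<Rightarrow> bool" where
  "Gd c u \<longleftrightarrow> (\<exists>f g. ev c g \<noteq> 0 \<and> u = Fract f g)"

lemma ev_nz: "ev c g \<noteq> 0 \<Longrightarrow> g \<noteq> 0" by auto

lemma Gd_const: "Gd c (Fract a 1)"
  unfolding Gd_def by (rule exI[of _ a], rule exI[of _ 1]) simp

lemma Gd_zero: "Gd c 0" using Gd_const[of c 0] by (simp add: Zero_fract_def)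

lemma Gd_add: "Gd c u \<Longrightarrow> Gd c v \<Longrightarrow> Gd c (u + v)"
proof -
  assume "Gd c u" "Gd c v"
  then obtain f g f' g' where a: "ev c g \<noteq> 0" "u = Fract f g" "ev c g' \<noteq> 0" "v = Fract f' g'"
    unfolding Gd_def by blast
  then have "g \<noteq> 0" "g' \<noteq> 0" by auto
  then have "u + v = Fract (f * g' + f' * g) (g * g')" "ev c (g * g') \<noteq> 0"
    using a by (auto simp: ev_mult)
  then show ?thesis unfolding Gd_def by blast
qed

lemma Gd_mult: "Gd c u \<Longrightarrow> Gd c v \<Longrightarrow> Gd c (u * v)"
proof -
  assume "Gd c u" "Gd c v"
  then obtain f g f' g' where a: "ev c g \<noteq> 0" "u = Fract f g" "ev c g' \<noteq> 0" "v = Fract f' g'"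
    unfolding Gd_def by blast
  then have "u * v = Fract (f * f') (g * g')" "ev c (g * g') \<noteq> 0"
    by (auto simp: ev_mult)
  then show ?thesis unfolding Gd_def by blast
qed

lemma Gd_uminus: "Gd c u \<Longrightarrow> Gd c (- u)"
proof -
  assume "Gd c u"
  then obtain f g where a: "ev c g \<noteq> 0" "u = Fract f g"
    unfolding Gd_def by blast
  then have "- u = Fract (- f) g" by simp
  then show ?thesis unfolding Gd_def using a by blast
qed

lemma Gd_pow: "Gd c u \<Longrightarrow> Gd c (u ^ n)"
  by (induction n) (auto intro: Gd_mult simp: Gd_const[of c 1, simplified One_fract_def[symmetric]])

lemma Gd_inv_S: "s \<le> c \<Longrightarrow> c < t \<Longrightarrow> Gd c (inverse (S s t))"
proof -
  assume a: "s \<le> c" "c < t"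
  have "ev c (\<Sum>l\<in>{s..<t}. var l) = (\<Sum>l\<in>{s..<t}. if l = c then 1 else 0)"
    by (simp add: ev_sum ev_var)
  also have "\<dots> = 1" using a by simp
  finally show ?thesis unfolding S_fract Gd_def
    by (intro exI[of _ 1] exI[of _ "\<Sum>l\<in>{s..<t}. var l"]) simp
qed

lemma T_base: "s \<le> k + 2 \<Longrightarrow> Gd (k+1) (T k s (k+1))"
proof -
  assume s: "s \<le> k + 2"
  consider "s = k + 2" | "s = k + 1" | "s < k + 1" using s by linarith
  then show ?thesis
  proof cases
    case 1
    then show ?thesis by (simp add: T_def Gd_zero)
  next
    case 2
    have "T k s (k+1) = Z s (k+1)" by (simp add: T_def Z_def)
    also have "\<dots> = (-1)^(k+1)" using 2 by (simp add: Z_self)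
    finally show ?thesis
      using Gd_pow[OF Gd_uminus[OF Gd_const[of "k+1" 1]], of "k+1"] by (simp only: One_fract_def[symmetric])
  next
    case 3
    have "T k s (k+1) = Z s (k+1)" by (simp add: T_def Z_def)
    also have "\<dots> = 0" using 3 by (simp add: Z_zero)
    finally show ?thesis by (simp add: Gd_zero)
  qed
qed

lemma T_good: "s \<le> k + 2 \<Longrightarrow> Gd (k+1) (T k s (k + 1 + d))"
proof (induction d arbitrary: s)
  case 0
  then show ?case using T_base by simp
next
  case (Suc d)
  let ?t = "k + 1 + Suc d"
  show ?case using Suc.prems
  proof (induction "k + 2 - s" arbitrary: s rule: less_induct)
    case less
    show ?case
    proof (cases "s = k + 2")
      case True
      then show ?thesis by (simp add: T_def Gd_zero)
    next
      case False
      then have s: "s \<le> k + 1" using less.prems by simp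
      have rec: "S s ?t * T k s ?t = T k (Suc s) ?t + T k s (?t - 1)"
        using s by (intro T_rec) auto
      have eq: "T k s ?t = inverse (S s ?t) * (T k (Suc s) ?t + T k s (?t - 1))"
        using rec S_nz[of s ?t] s by (simp add: field_simps)
      have g1: "Gd (k+1) (T k (Suc s) ?t)" using less.hyps[of "Suc s"] s by simp
      have g2: "Gd (k+1) (T k s (?t - 1))" using Suc.IH[of s] s by simp
      show ?thesis unfolding eq
        by (intro Gd_mult Gd_add g1 g2 Gd_inv_S) (use s in auto)
    qed
  qed
qed

theorem mainTheorem8:
  fixes k m :: nat
  assumes "m \<ge> 1"
  shows "\<exists>f g :: mpoly. g \<noteq> 0 \<and> Qfrac k m = Fract f g \<and>
           (\<forall>eps'. length eps' = k \<longrightarrow> (\<forall>t\<in>{1..k}. \<not> Mpoly eps' t dvd g))"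
proof -
  have "Qfrac k m = - T k 1 (k + m + 1)"
    by (simp add: Qfrac_QQ QQ_formula T_def)
  moreover have "Gd (k+1) (T k 1 (k + 1 + m))" by (rule T_good) simp
  ultimately have "Gd (k+1) (Qfrac k m)" by (simp add: Gd_uminus add.commute add.left_commute)
  then obtain f g where fg: "ev (k+1) g \<noteq> 0" "Qfrac k m = Fract f g" unfolding Gd_def by blast
  have "\<not> Mpoly eps' t dvd g" if "t \<in> {1..k}" for eps' t
  proof
    assume "Mpoly eps' t dvd g"
    then obtain h where h: "g = Mpoly eps' t * h" by (auto elim: dvdE)
    have "ev (k+1) (Mpoly eps' t) = (\<Sum>l\<in>{Lidx eps' t..t}. if l = k + 1 then 1 else 0)"
      by (simp add: Mpoly_def ev_sum ev_var)
    also have "\<dots> = 0" using that by (intro sum.neutral) auto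
    finally show False using fg(1) h by (simp add: ev_mult)
  qed
  then show ?thesis using fg ev_nz by blast
qed

end
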